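(* Let $\Delta=\prod_{1\le i<j\le n}(x_i-x_j)$ and for $n-1\ge m_1>\dots>m_k\ge1$ let $\omega_{m_1,\dots,m_k}=d_{m_1}\cdots d_{m_k}\Delta$. Then the set \[ \{\omega_{m_1,\dots,m_k}\mid n-1\ge m_1>\dots>m_k\ge1,\ k=1,\dots,n-1\}\cup\{\Delta\} \] is linearly independent in $\mathbb{R}[x_1,\dots,x_n]\otimes\wedge\mathbb{R}^n$.
   Context: With $\partial_i=\partial/\partial x_i$, $d_j(h\,dx_{i_1}\wedge\cdots\wedge dx_{i_k})=\sum_{l=1}^n(\partial_l^jh)\,dx_l\wedge dx_{i_1}\wedge\cdots\wedge dx_{i_k}$, extended linearly. *)

theory Defs
  imports "HOL-Analysis.Analysis"
begin

text \<open>Polynomials in x_1..x_n are represented by their (real) polynomial functions on points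
  p :: nat \<Rightarrow> real, variable x_{i+1} being the coordinate p i (0-based, i < n).
  A differential form in R[x_1..x_n] \<otimes> \<wedge>R^n is represented by its coefficient family:
  for each finite set J \<subseteq> {0..<n} (the increasing multi-index) the coefficient of dx_J.\<close>

type_synonym pfun = "(nat \<Rightarrow> real) \<Rightarrow> real"
type_synonym form = "nat set \<Rightarrow> pfun"

definition partial :: "nat \<Rightarrow> pfun \<Rightarrow> pfun" where
  "partial l f = (\<lambda>p. deriv (\<lambda>t. f (p(l := t))) (p l))"

text \<open>Sign of dx_l \<and> dx_I = sign * dx_{I \<union> {l}} (l \<notin> I).\<close>
definition wedge_sign :: "nat \<Rightarrow> nat set \<Rightarrow> real" where
  "wedge_sign l I = (-1) ^ card {i \<in> I. i < l}"

text \<open>d_j(h dx_I) = \<Sum>_l (\<partial>_l^j h) dx_l \<and> dx_I, extended linearly; coefficient of dx_J.\<close>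
definition dj :: "nat \<Rightarrow> nat \<Rightarrow> form \<Rightarrow> form" where
  "dj n j \<omega> J = (if J \<subseteq> {..<n}
      then (\<lambda>p. \<Sum>l\<in>J. wedge_sign l (J - {l}) * ((partial l ^^ j) (\<omega> (J - {l}))) p)
      else (\<lambda>p. 0))"

definition Delta :: "nat \<Rightarrow> form" where
  "Delta n J = (if J = {} then (\<lambda>p. \<Prod>(i,j)\<in>{(i,j). i < j \<and> j < n}. p i - p j) else (\<lambda>p. 0))"

fun omega :: "nat \<Rightarrow> nat list \<Rightarrow> form" where
  "omega n [] = Delta n"
| "omega n (m # ms) = dj n m (omega n ms)"

definition index_seqs :: "nat \<Rightarrow> nat list set" where
  "index_seqs n = {ms. sorted_wrt (>) ms \<and> set ms \<subseteq> {1..n-1}}"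

definition lin_indep_family :: "'i set \<Rightarrow> ('i \<Rightarrow> form) \<Rightarrow> bool" where
  "lin_indep_family S f \<longleftrightarrow>
     (\<forall>c. (\<forall>J p. (\<Sum>s\<in>S. c s * f s J p) = 0) \<longrightarrow> (\<forall>s\<in>S. c s = 0))"

end

theory Submission
  imports Defs
begin


inductive_set PF :: "pfun set" where
  PF_const: "(\<lambda>p. c) \<in> PF"
| PF_coord: "(\<lambda>p. p i) \<in> PF"
| PF_add: "f \<in> PF \<Longrightarrow> g \<in> PF \<Longrightarrow> (\<lambda>p. f p + g p) \<in> PF"
| PF_mult: "f \<in> PF \<Longrightarrow> g \<in> PF \<Longrightarrow> (\<lambda>p. f p * g p) \<in> PF"

lemma PF_basic:
  assumes "f \<in> PF"
  shows "partial l f \<in> PF \<and> (\<forall>p. ((\<lambda>t. f (p(l:=t))) has_real_derivative partial l f p) (at (p l)))"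
  using assms
proof induction
  case (PF_const c)
  have e: "partial l (\<lambda>p. c) = (\<lambda>p. 0)" by (rule ext) (simp add: partial_def)
  show ?case unfolding e by (auto intro: PF.intros)
next
  case (PF_coord i)
  have e: "partial l (\<lambda>p. p i) = (\<lambda>p. if i = l then 1 else 0)"
  proof (rule ext)
    fix p :: "nat \<Rightarrow> real"
    show "partial l (\<lambda>p. p i) p = (if i = l then 1 else 0)"
    proof (cases "i = l")
      case True
      then show ?thesis by (simp add: partial_def)
    next
      case False
      then show ?thesis by (simp add: partial_def)
    qed
  qed
  show ?case unfolding e
    by (auto intro: PF.intros)
next
  case (PF_add f g)
  have d: "\<And>p. ((\<lambda>t. f (p(l:=t)) + g (p(l:=t))) has_real_derivative partial l f p + partial l g p) (at (p l))"
  proof -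
    fix p :: "nat \<Rightarrow> real"
    have "((\<lambda>t. f (p(l:=t))) has_real_derivative partial l f p) (at (p l))"
      using PF_add.IH(1) by blast
    moreover have "((\<lambda>t. g (p(l:=t))) has_real_derivative partial l g p) (at (p l))"
      using PF_add.IH(2) by blast
    ultimately show "?thesis p" by (rule DERIV_add)
  qed
  have e: "partial l (\<lambda>p. f p + g p) = (\<lambda>p. partial l f p + partial l g p)"
    by (rule ext) (simp add: partial_def[of l "\<lambda>p. f p + g p"] DERIV_imp_deriv[OF d])
  show ?case unfolding e using PF_add.IH d by (intro conjI allI PF.intros) blast+
next
  case (PF_mult f g)
  have d: "\<And>p. ((\<lambda>t. f (p(l:=t)) * g (p(l:=t))) has_real_derivative partial l f p * g p + f p * partial l g p) (at (p l))"
  proof -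
    fix p :: "nat \<Rightarrow> real"
    have 1: "((\<lambda>t. f (p(l:=t))) has_real_derivative partial l f p) (at (p l))"
      using PF_mult.IH(1) by blast
    have 2: "((\<lambda>t. g (p(l:=t))) has_real_derivative partial l g p) (at (p l))"
      using PF_mult.IH(2) by blast
    have "((\<lambda>t. f (p(l:=t)) * g (p(l:=t))) has_real_derivative f (p(l:= p l)) * partial l g p + partial l f p * g (p(l:=p l))) (at (p l))"
      using DERIV_mult'[OF 1 2] .
    then show "?thesis p" by (simp add: algebra_simps)
  qed
  have e: "partial l (\<lambda>p. f p * g p) = (\<lambda>p. partial l f p * g p + f p * partial l g p)"
    by (rule ext) (simp add: partial_def[of l "\<lambda>p. f p * g p"] DERIV_imp_deriv[OF d])
  show ?case unfolding e using PF_mult.IH PF_mult.hyps d by (intro conjI allI PF.intros) blast+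
qed

lemma PF_partial[simp,intro]: "f \<in> PF \<Longrightarrow> partial l f \<in> PF"
  using PF_basic by blast

lemma PF_has_partial: "f \<in> PF \<Longrightarrow> ((\<lambda>t. f (p(l:=t))) has_real_derivative partial l f p) (at (p l))"
  using PF_basic by blast

lemma partial_const[simp]: "partial l (\<lambda>p. c) = (\<lambda>p. 0)"
  by (rule ext) (simp add: partial_def)

lemma partial_coord: "partial l (\<lambda>p. p i) = (\<lambda>p. if i = l then 1 else 0)"
proof (rule ext)
  fix p :: "nat \<Rightarrow> real"
  show "partial l (\<lambda>p. p i) p = (if i = l then 1 else 0)"
    by (cases "i = l") (simp_all add: partial_def)
qed

lemma partial_add:
  assumes "f \<in> PF" "g \<in> PF"
  shows "partial l (\<lambda>p. f p + g p) = (\<lambda>p. partial l f p + partial l g p)"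
proof (rule ext)
  fix p :: "nat \<Rightarrow> real"
  have d: "((\<lambda>t. f (p(l:=t)) + g (p(l:=t))) has_real_derivative partial l f p + partial l g p) (at (p l))"
    using assms by (intro DERIV_add PF_has_partial)
  show "partial l (\<lambda>p. f p + g p) p = partial l f p + partial l g p"
    using DERIV_imp_deriv[OF d] by (simp add: partial_def[of l "\<lambda>p. f p + g p"])
qed

lemma partial_mult:
  assumes "f \<in> PF" "g \<in> PF"
  shows "partial l (\<lambda>p. f p * g p) = (\<lambda>p. partial l f p * g p + f p * partial l g p)"
proof (rule ext)
  fix p :: "nat \<Rightarrow> real"
  have 1: "((\<lambda>t. f (p(l:=t))) has_real_derivative partial l f p) (at (p l))"
    using assms by (intro PF_has_partial)
  have 2: "((\<lambda>t. g (p(l:=t))) has_real_derivative partial l g p) (at (p l))"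
    using assms by (intro PF_has_partial)
  have d: "((\<lambda>t. f (p(l:=t)) * g (p(l:=t))) has_real_derivative partial l f p * g p + f p * partial l g p) (at (p l))"
    using DERIV_mult'[OF 1 2] by (simp add: algebra_simps)
  show "partial l (\<lambda>p. f p * g p) p = partial l f p * g p + f p * partial l g p"
    using DERIV_imp_deriv[OF d] by (simp add: partial_def[of l "\<lambda>p. f p * g p"])
qed

lemma PF_cmult[simp,intro]: "f \<in> PF \<Longrightarrow> (\<lambda>p. c * f p) \<in> PF"
  using PF_mult[OF PF_const[of c]] by simp

lemma PF_neg[simp,intro]: "f \<in> PF \<Longrightarrow> (\<lambda>p. - f p) \<in> PF"
  using PF_cmult[of f "-1"] by simp

lemma PF_diff[simp,intro]: "f \<in> PF \<Longrightarrow> g \<in> PF \<Longrightarrow> (\<lambda>p. f p - g p) \<in> PF"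
  using PF_add[OF _ PF_neg[of g]] by simp

lemma PF_sum[simp,intro]: "(\<And>a. a \<in> A \<Longrightarrow> h a \<in> PF) \<Longrightarrow> (\<lambda>p. \<Sum>a\<in>A. h a p) \<in> PF"
proof (induction A rule: infinite_finite_induct)
  case (infinite A)
  then show ?case by (simp add: PF_const)
next
  case empty
  then show ?case by (simp add: PF_const)
next
  case (insert x F)
  then show ?case by (simp add: PF_add)
qed

lemma PF_prod[simp,intro]: "(\<And>a. a \<in> A \<Longrightarrow> h a \<in> PF) \<Longrightarrow> (\<lambda>p. \<Prod>a\<in>A. h a p) \<in> PF"
proof (induction A rule: infinite_finite_induct)
  case (infinite A)
  then show ?case by (simp add: PF_const)
next
  case empty
  then show ?case by (simp add: PF_const)
next
  case (insert x F)
  then show ?case by (simp add: PF_mult)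
qed

lemma partial_cmult: "f \<in> PF \<Longrightarrow> partial l (\<lambda>p. c * f p) = (\<lambda>p. c * partial l f p)"
  using partial_mult[OF PF_const[of c], of f l] by simp

lemma partial_diff: "f \<in> PF \<Longrightarrow> g \<in> PF \<Longrightarrow> partial l (\<lambda>p. f p - g p) = (\<lambda>p. partial l f p - partial l g p)"
  using partial_add[OF _ PF_neg[of g], of f l] partial_cmult[of g l "-1"] by simp

lemma partial_sum: "(\<And>a. a \<in> A \<Longrightarrow> h a \<in> PF) \<Longrightarrow> partial l (\<lambda>p. \<Sum>a\<in>A. h a p) = (\<lambda>p. \<Sum>a\<in>A. partial l (h a) p)"
proof (induction A rule: infinite_finite_induct)
  case (infinite A)
  then show ?case by simp
next
  case empty
  then show ?case by simp
next
  case (insert x F)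
  then show ?case by (simp add: partial_add)
qed

lemma partial_indep: "(\<And>p t. g (p(l:=t)) = g p) \<Longrightarrow> partial l g = (\<lambda>p. 0)"
  by (rule ext) (simp add: partial_def)

lemma partial_comm: "f \<in> PF \<Longrightarrow> partial i (partial j f) = partial j (partial i f)"
proof (induction rule: PF.induct)
  case (PF_const c)
  then show ?case by simp
next
  case (PF_coord k)
  then show ?case by (simp add: partial_coord)
next
  case (PF_add f g)
  then show ?case by (simp add: partial_add)
next
  case (PF_mult f g)
  then show ?case by (simp add: partial_mult partial_add PF.intros algebra_simps)
qed

lemma PF_pow[simp,intro]: "f \<in> PF \<Longrightarrow> (partial l ^^ k) f \<in> PF"
  by (induction k) auto

lemma comm_pow1: "f \<in> PF \<Longrightarrow> partial i ((partial j ^^ b) f) = (partial j ^^ b) (partial i f)"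
proof (induction b)
  case 0
  then show ?case by simp
next
  case (Suc b)
  then show ?case using partial_comm[of "(partial j ^^ b) f" i j] by simp
qed

lemma comm_pow: "f \<in> PF \<Longrightarrow> (partial i ^^ a) ((partial j ^^ b) f) = (partial j ^^ b) ((partial i ^^ a) f)"
  by (induction a) (auto simp: comm_pow1)

lemma pow_lin: "(\<And>a. a \<in> A \<Longrightarrow> h a \<in> PF) \<Longrightarrow>
   (partial l ^^ k) (\<lambda>p. \<Sum>a\<in>A. c a * h a p) = (\<lambda>p. \<Sum>a\<in>A. c a * (partial l ^^ k) (h a) p)"
  by (induction k) (auto simp: partial_sum partial_cmult)

lemma pow_zero[simp]: "(partial l ^^ k) (\<lambda>p. 0) = (\<lambda>p. 0)"
  by (induction k) auto

fun pd :: "(nat \<Rightarrow> nat) \<Rightarrow> nat \<Rightarrow> pfun \<Rightarrow> pfun" where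
  "pd e 0 f = f"
| "pd e (Suc k) f = pd e k ((partial k ^^ e k) f)"

lemma pd_PF[simp,intro]: "f \<in> PF \<Longrightarrow> pd e n f \<in> PF"
  by (induction n arbitrary: f) auto

lemma pd_cong: "(\<And>i. i < n \<Longrightarrow> e i = e' i) \<Longrightarrow> pd e n f = pd e' n f"
  by (induction n arbitrary: f) auto

lemma pd_zero[simp]: "pd e n (\<lambda>p. 0) = (\<lambda>p. 0)"
  by (induction n) auto

lemma pd_lin: "(\<And>a. a \<in> A \<Longrightarrow> h a \<in> PF) \<Longrightarrow>
   pd e n (\<lambda>p. \<Sum>a\<in>A. c a * h a p) = (\<lambda>p. \<Sum>a\<in>A. c a * pd e n (h a) p)"
proof (induction n arbitrary: h)
  case 0
  then show ?case by simp
next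
  case (Suc n)
  have "pd e (Suc n) (\<lambda>p. \<Sum>a\<in>A. c a * h a p) = pd e n (\<lambda>p. \<Sum>a\<in>A. c a * (partial n ^^ e n) (h a) p)"
    using Suc.prems by (simp add: pow_lin)
  also have "\<dots> = (\<lambda>p. \<Sum>a\<in>A. c a * pd e n ((partial n ^^ e n) (h a)) p)"
    using Suc.prems by (intro Suc.IH) auto
  finally show ?case by simp
qed

lemma pd_cmult: "f \<in> PF \<Longrightarrow> pd e n (\<lambda>p. c * f p) = (\<lambda>p. c * pd e n f p)"
  using pd_lin[of "{()}" "\<lambda>_. f" e n "\<lambda>_. c"] by simp

lemma pd_commute_in:
  assumes "l < n" "f \<in> PF"
  shows "pd e n ((partial l ^^ k) f) = pd (e(l := e l + k)) n f"
  using assms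
proof (induction n arbitrary: f e)
  case 0
  then show ?case by simp
next
  case (Suc n)
  show ?case
  proof (cases "l = n")
    case True
    have "pd e (Suc n) ((partial n ^^ k) f) = pd e n ((partial n ^^ (e n + k)) f)"
      by (simp add: funpow_add)
    also have "\<dots> = pd (e(n := e n + k)) n ((partial n ^^ (e n + k)) f)"
      by (intro pd_cong) auto
    also have "\<dots> = pd (e(n := e n + k)) (Suc n) f"
      by simp
    finally show ?thesis using True by (simp only:)
  next
    case False
    then have ln: "l < n" using Suc.prems by simp
    have "pd e (Suc n) ((partial l ^^ k) f) = pd e n ((partial l ^^ k) ((partial n ^^ e n) f))"
      using Suc.prems by (simp add: comm_pow)
    also have "\<dots> = pd (e(l := e l + k)) n ((partial n ^^ e n) f)"
      using Suc.prems ln by (intro Suc.IH) auto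
    finally show ?thesis using False by (simp add: fun_upd_def)
  qed
qed



definition sw :: "nat \<Rightarrow> nat \<Rightarrow> nat \<Rightarrow> nat" where
  "sw a b i = (if i = a then b else if i = b then a else i)"

definition D :: "nat \<Rightarrow> (nat \<Rightarrow> nat) \<Rightarrow> real" where
  "D n e = pd e n (Delta n {}) (\<lambda>_. 0)"

definition G :: "nat \<Rightarrow> nat list \<Rightarrow> nat set \<Rightarrow> (nat \<Rightarrow> nat) \<Rightarrow> real" where
  "G n ms J e = pd e n (omega n ms J) (\<lambda>_. 0)"

lemma Delta0_eq: "Delta n {} = (\<lambda>p. \<Prod>x\<in>{(i,j). i < j \<and> j < n}. (\<lambda>p. p (fst x) - p (snd x)) p)"
  by (rule ext) (simp add: Delta_def case_prod_beta)

lemma Delta_PF[simp,intro]: "Delta n J \<in> PF"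
proof (cases "J = {}")
  case True
  then show ?thesis unfolding True Delta0_eq by (intro PF_prod PF_diff PF_coord)
next
  case False
  then show ?thesis by (simp add: Delta_def PF_const)
qed

lemma dj_eq: "J \<subseteq> {..<n} \<Longrightarrow> dj n m w J = (\<lambda>p. \<Sum>l\<in>J. wedge_sign l (J - {l}) * (partial l ^^ m) (w (J - {l})) p)"
  by (simp add: dj_def)

lemma omega_PF[simp,intro]: "omega n ms J \<in> PF"
proof (induction ms arbitrary: J)
  case Nil
  then show ?case by simp
next
  case (Cons m ms)
  show ?case
  proof (cases "J \<subseteq> {..<n}")
    case True
    then show ?thesis using Cons by (simp add: dj_eq)
  next
    case False
    then show ?thesis by (simp add: dj_def PF_const)
  qed
qed

lemma G_nil: "G n [] J e = (if J = {} then D n e else 0)"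
  by (simp add: G_def D_def Delta_def)

lemma G_cons: assumes "J \<subseteq> {..<n}"
  shows "G n (m#ms) J e = (\<Sum>l\<in>J. wedge_sign l (J-{l}) * G n ms (J-{l}) (e(l := e l + m)))"
proof -
  have "G n (m#ms) J e = (\<Sum>l\<in>J. wedge_sign l (J-{l}) * pd e n ((partial l ^^ m) (omega n ms (J - {l}))) (\<lambda>_. 0))"
    unfolding G_def using assms by (simp add: dj_eq pd_lin)
  also have "\<dots> = (\<Sum>l\<in>J. wedge_sign l (J-{l}) * G n ms (J-{l}) (e(l := e l + m)))"
    unfolding G_def using assms by (intro sum.cong refl) (auto simp: pd_commute_in)
  finally show ?thesis .
qed

lemma G_out: "\<not> J \<subseteq> {..<n} \<Longrightarrow> G n (m#ms) J e = 0"
  by (simp add: G_def dj_def)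



lemma sw_sw[simp]: "sw a b (sw a b i) = i"
  by (simp add: sw_def)

lemma upd_comp_sw: "(\<lambda>i. (p(l:=t)) (sw a b i)) = (\<lambda>i. p (sw a b i))(sw a b l := t)"
  by (rule ext) (auto simp: sw_def)

lemma partial_comp_sw: "partial l (\<lambda>p. f (\<lambda>i. p (sw a b i))) = (\<lambda>p. partial (sw a b l) f (\<lambda>i. p (sw a b i)))"
proof (rule ext)
  fix p :: "nat \<Rightarrow> real"
  have eq1: "\<And>t. (\<lambda>i. (p(l:=t)) (sw a b i)) = (\<lambda>i. p (sw a b i))(sw a b l := t)"
    by (rule ext) (auto simp: sw_def)
  have "partial l (\<lambda>p. f (\<lambda>i. p (sw a b i))) p = deriv (\<lambda>t. f (\<lambda>i. (p(l:=t)) (sw a b i))) (p l)"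
    by (simp only: partial_def)
  also have "\<dots> = deriv (\<lambda>t. f ((\<lambda>i. p (sw a b i))(sw a b l := t))) (p l)"
    by (simp only: eq1)
  also have "\<dots> = partial (sw a b l) f (\<lambda>i. p (sw a b i))"
    by (simp only: partial_def sw_sw)
  finally show "partial l (\<lambda>p. f (\<lambda>i. p (sw a b i))) p = partial (sw a b l) f (\<lambda>i. p (sw a b i))" .
qed

lemma pow_comp_sw: "(partial l ^^ k) (\<lambda>p. f (\<lambda>i. p (sw a b i))) = (\<lambda>p. (partial (sw a b l) ^^ k) f (\<lambda>i. p (sw a b i)))"
proof (induction k)
  case 0
  then show ?case by simp
next
  case (Suc k)
  then show ?case by (simp add: partial_comp_sw)
qed

lemma pd_comp_sw: "e a = 0 \<Longrightarrow> e b = 0 \<Longrightarrow> pd e n (\<lambda>p. f (\<lambda>i. p (sw a b i))) = (\<lambda>p. pd e n f (\<lambda>i. p (sw a b i)))"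
proof (induction n arbitrary: f)
  case 0
  then show ?case by simp
next
  case (Suc k)
  have "(partial (sw a b k) ^^ e k) f = (partial k ^^ e k) f"
    using Suc.prems by (cases "k = a \<or> k = b") (auto simp: sw_def)
  then show ?case using Suc by (simp add: pow_comp_sw)
qed

lemma PF_comp: "f \<in> PF \<Longrightarrow> (\<lambda>p. f (\<lambda>i. p (s i))) \<in> PF"
proof (induction rule: PF.induct)
  case (PF_const c)
  then show ?case by (simp add: PF.PF_const)
next
  case (PF_coord i)
  then show ?case by (simp add: PF.PF_coord)
next
  case (PF_add f g)
  then show ?case by (simp add: PF.PF_add)
next
  case (PF_mult f g)
  then show ?case by (simp add: PF.PF_mult)
qed

lemma D_swap_gen:
  assumes ab: "a < n" "b < n" "a \<noteq> b"
    and anti: "\<And>p. Delta n {} (\<lambda>i. p (sw a b i)) = - Delta n {} p"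
  shows "D n (e \<circ> sw a b) = - D n e"
proof -
  let ?s = "sw a b"
  let ?Dl = "Delta n {}"
  define F where "F = (\<lambda>p. ?Dl (\<lambda>i. p (?s i)))"
  define e' where "e' = e(a:=0, b:=0)"
  have sab: "?s a = b" "?s b = a" by (auto simp: sw_def)
  have Ds: "F = (\<lambda>p. (-1) * ?Dl p)" using anti by (simp add: F_def)
  have PFs: "F \<in> PF" unfolding F_def by (rule PF_comp[OF Delta_PF])
  have s1: "pd e n F = pd (e(b:=0)) n ((partial b ^^ e b) F)"
    using pd_commute_in[OF ab(2) PFs, of "e(b:=0)" "e b"] by simp
  have s2: "pd (e(b:=0)) n ((partial b ^^ e b) F) = pd e' n ((partial a ^^ e a) ((partial b ^^ e b) F))"
  proof -
    have "pd e' n ((partial a ^^ e a) ((partial b ^^ e b) F)) = pd (e'(a := e' a + e a)) n ((partial b ^^ e b) F)"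
      by (rule pd_commute_in[OF ab(1)]) (rule PF_pow[OF PFs])
    also have "\<dots> = pd (e(b:=0)) n ((partial b ^^ e b) F)"
      by (rule pd_cong) (use ab in \<open>auto simp: e'_def\<close>)
    finally show ?thesis by simp
  qed
  have s3: "(partial a ^^ e a) ((partial b ^^ e b) F) = (\<lambda>p. (partial b ^^ e a) ((partial a ^^ e b) ?Dl) (\<lambda>i. p (?s i)))"
    unfolding F_def pow_comp_sw sab ..
  have s4: "pd e' n (\<lambda>p. (partial b ^^ e a) ((partial a ^^ e b) ?Dl) (\<lambda>i. p (?s i)))
      = (\<lambda>p. pd e' n ((partial b ^^ e a) ((partial a ^^ e b) ?Dl)) (\<lambda>i. p (?s i)))"
    by (rule pd_comp_sw) (auto simp: e'_def)
  have s5: "pd e' n ((partial b ^^ e a) ((partial a ^^ e b) ?Dl)) = pd (e'(b := e' b + e a)) n ((partial a ^^ e b) ?Dl)"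
    by (rule pd_commute_in[OF ab(2)]) (rule PF_pow[OF Delta_PF])
  have s6: "pd (e'(b := e' b + e a)) n ((partial a ^^ e b) ?Dl) = pd ((e'(b := e' b + e a))(a := (e'(b := e' b + e a)) a + e b)) n ?Dl"
    by (rule pd_commute_in[OF ab(1) Delta_PF])
  have s7: "pd ((e'(b := e' b + e a))(a := (e'(b := e' b + e a)) a + e b)) n ?Dl = pd (e \<circ> ?s) n ?Dl"
    by (rule pd_cong) (use ab in \<open>auto simp: e'_def sw_def\<close>)
  have 1: "pd e n F = (\<lambda>p. pd (e \<circ> ?s) n ?Dl (\<lambda>i. p (?s i)))"
    unfolding s1 s2 s3 s4 s5 s6 s7 ..
  have 2: "pd e n F = (\<lambda>p. (-1) * pd e n ?Dl p)"
    unfolding Ds by (rule pd_cmult) simp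
  have "D n (e \<circ> ?s) = pd (e \<circ> ?s) n ?Dl (\<lambda>i. (\<lambda>_. 0) (?s i))"
    by (simp add: D_def)
  also have "\<dots> = (-1) * pd e n ?Dl (\<lambda>_. 0)"
    using fun_cong[OF trans[OF 1[symmetric] 2], of "\<lambda>_. 0"] by simp
  finally show ?thesis by (simp add: D_def)
qed



lemma Delta0_prod: "Delta n {} p = (\<Prod>x\<in>{(i,j). i < j \<and> j < n}. p (fst x) - p (snd x))"
  by (simp add: Delta_def case_prod_beta)

lemma finite_pairs: "finite {(i,j). i < j \<and> j < (n::nat)}"
  by (rule finite_subset[of _ "{..<n} \<times> {..<n}"]) auto

lemma Delta_anti_adj:
  assumes "Suc a < n"
  shows "Delta n {} (\<lambda>i. p (sw a (Suc a) i)) = - Delta n {} p"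
proof -
  let ?s = "sw a (Suc a)"
  define P where "P = {(i,j). i < j \<and> j < (n::nat)}"
  define P' where "P' = P - {(a, Suc a)}"
  define g where "g = (\<lambda>x. p (fst x) - p (snd x))"
  define \<phi> where "\<phi> = (\<lambda>x. (?s (fst x), ?s (snd x)))"
  have fP: "finite P" unfolding P_def by (rule finite_pairs)
  have aP: "(a, Suc a) \<in> P" using assms by (simp add: P_def)
  have into: "\<phi> x \<in> P'" if "x \<in> P'" for x
    using that assms by (cases x) (auto simp: P'_def P_def \<phi>_def sw_def)
  have invol: "\<phi> (\<phi> x) = x" for x by (simp add: \<phi>_def)
  have img: "\<phi> ` P' = P'"
  proof
    show "\<phi> ` P' \<subseteq> P'" using into by auto
    show "P' \<subseteq> \<phi> ` P'"
    proof
      fix x assume "x \<in> P'"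
      then have "\<phi> x \<in> P'" by (rule into)
      then show "x \<in> \<phi> ` P'" using invol[of x] by (metis image_eqI)
    qed
  qed
  have inj: "inj_on \<phi> P'" by (metis inj_on_inverseI invol)
  have "Delta n {} (\<lambda>i. p (?s i)) = (\<Prod>x\<in>P. g (\<phi> x))"
    by (simp add: Delta0_prod P_def g_def \<phi>_def)
  also have "\<dots> = g (\<phi> (a, Suc a)) * (\<Prod>x\<in>P'. g (\<phi> x))"
    unfolding P'_def using fP aP by (rule prod.remove)
  also have "(\<Prod>x\<in>P'. g (\<phi> x)) = (\<Prod>x\<in>\<phi> ` P'. g x)"
    using prod.reindex[OF inj, of g] by simp
  also have "\<dots> = (\<Prod>x\<in>P'. g x)" by (simp only: img)
  also have "g (\<phi> (a, Suc a)) = - g (a, Suc a)" by (simp add: g_def \<phi>_def sw_def)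
  finally have "Delta n {} (\<lambda>i. p (?s i)) = - (g (a, Suc a) * (\<Prod>x\<in>P'. g x))" by simp
  also have "g (a, Suc a) * (\<Prod>x\<in>P'. g x) = (\<Prod>x\<in>P. g x)"
    unfolding P'_def using fP aP by (rule prod.remove[symmetric])
  also have "\<dots> = Delta n {} p" by (simp add: Delta0_prod P_def g_def)
  finally show ?thesis .
qed

lemma D_swap_adj: "Suc a < n \<Longrightarrow> D n (e \<circ> sw a (Suc a)) = - D n e"
  by (rule D_swap_gen) (auto intro: Delta_anti_adj)

lemma sw_conj: "a < b \<Longrightarrow> sw a (Suc b) = sw b (Suc b) \<circ> sw a b \<circ> sw b (Suc b)"
  by (rule ext) (auto simp: sw_def)

lemma D_swap_lt: "a < b \<Longrightarrow> b < n \<Longrightarrow> D n (e \<circ> sw a b) = - D n e"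
proof (induction b arbitrary: e)
  case 0
  then show ?case by simp
next
  case (Suc b)
  show ?case
  proof (cases "a = b")
    case True
    then show ?thesis using Suc.prems D_swap_adj[of a n e] by (simp add: comp_def)
  next
    case False
    then have ab: "a < b" using Suc.prems by simp
    let ?t = "sw b (Suc b)"
    have "e \<circ> sw a (Suc b) = ((e \<circ> ?t) \<circ> sw a b) \<circ> ?t"
      using sw_conj[OF ab] by (simp add: comp_assoc)
    then have "D n (e \<circ> sw a (Suc b)) = - D n ((e \<circ> ?t) \<circ> sw a b)"
      using D_swap_adj[of b n "(e \<circ> ?t) \<circ> sw a b"] Suc.prems by simp
    also have "\<dots> = D n (e \<circ> ?t)"
    proof -
      have "D n ((e \<circ> ?t) \<circ> sw a b) = - D n (e \<circ> ?t)"
        by (rule Suc.IH) (use ab Suc.prems in auto)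
      then show ?thesis by linarith
    qed
    also have "\<dots> = - D n e"
      using D_swap_adj[of b n e] Suc.prems by simp
    finally show ?thesis .
  qed
qed

lemma sw_sym: "sw a b = sw b a"
  by (rule ext) (auto simp: sw_def)

lemma D_swap: "a < n \<Longrightarrow> b < n \<Longrightarrow> a \<noteq> b \<Longrightarrow> D n (e \<circ> sw a b) = - D n e"
  by (metis D_swap_lt linorder_neqE_nat sw_sym)

lemma D_dup: assumes "u \<noteq> u'" "u < n" "u' < n" "e u = e u'" shows "D n e = 0"
proof -
  have "e \<circ> sw u u' = e" using assms by (auto simp: sw_def)
  then show ?thesis using D_swap[OF assms(2,3,1), of e] by simp
qed

lemma Z0: "finite J \<Longrightarrow> card J \<noteq> length ms \<Longrightarrow> G n ms J e = 0"
proof (induction ms arbitrary: J e)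
  case Nil
  then show ?case by (auto simp: G_nil)
next
  case (Cons m ms)
  show ?case
  proof (cases "J \<subseteq> {..<n}")
    case True
    have "G n ms (J - {l}) (e(l := e l + m)) = 0" if "l \<in> J" for l
    proof -
      have "card J > 0" using that Cons.prems by (auto simp: card_gt_0_iff)
      then show ?thesis using Cons.prems that by (intro Cons.IH) (auto simp: card_Diff_singleton)
    qed
    then show ?thesis using True by (simp add: G_cons)
  next
    case False
    then show ?thesis by (simp add: G_out)
  qed
qed

lemma Z1: "finite J \<Longrightarrow> u \<noteq> u' \<Longrightarrow> u < n \<Longrightarrow> u' < n \<Longrightarrow> u \<notin> J \<Longrightarrow> u' \<notin> J \<Longrightarrow> e u = e u'
   \<Longrightarrow> G n ms J e = 0"
proof (induction ms arbitrary: J e)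
  case Nil
  then show ?case by (auto simp: G_nil intro: D_dup)
next
  case (Cons m ms)
  show ?case
  proof (cases "J \<subseteq> {..<n}")
    case True
    have "G n ms (J - {l}) (e(l := e l + m)) = 0" if "l \<in> J" for l
      using Cons.prems that by (intro Cons.IH) auto
    then show ?thesis using True by (simp add: G_cons)
  next
    case False
    then show ?thesis by (simp add: G_out)
  qed
qed

lemma Z2: "finite J \<Longrightarrow> (\<forall>j\<in>J. e j = 0) \<Longrightarrow> v \<in> set ms \<Longrightarrow> u < n \<Longrightarrow> u \<notin> J \<Longrightarrow> e u = v
   \<Longrightarrow> G n ms J e = 0"
proof (induction ms arbitrary: J e)
  case Nil
  then show ?case by simp
next
  case (Cons m ms)
  show ?case
  proof (cases "J \<subseteq> {..<n}")
    case True
    have "G n ms (J - {l}) (e(l := e l + m)) = 0" if "l \<in> J" for l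
    proof (cases "v = m")
      case True
      show ?thesis
        using Cons.prems that True \<open>J \<subseteq> {..<n}\<close>
        by (intro Z1[of "J - {l}" u l]) auto
    next
      case False
      then show ?thesis
        using Cons.prems that by (intro Cons.IH) auto
    qed
    then show ?thesis using True by (simp add: G_cons)
  next
    case False
    then show ?thesis by (simp add: G_out)
  qed
qed



definition Bv :: "(nat \<Rightarrow> nat) \<Rightarrow> nat list \<Rightarrow> nat set \<Rightarrow> nat \<Rightarrow> nat" where
  "Bv e ms J = (\<lambda>j. if j \<in> J then ms ! card {i\<in>J. j < i} else e j)"

lemma cycle_lemma:
  assumes "finite J" "J \<subseteq> {..<n}" "l \<in> J"
  shows "D n (\<lambda>j. if j = l then m else if j \<in> J then ms ! card {i \<in> J - {l}. j < i} else e j)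
       = (-1)^(card {i\<in>J. l < i}) * D n (Bv e (m#ms) J)"
  using assms(3)
proof (induction "card {i\<in>J. l < i}" arbitrary: l rule: less_induct)
  case less
  show ?case
  proof (cases "card {i\<in>J. l < i} = 0")
    case True
    then have empty: "{i\<in>J. l < i} = {}" using assms(1) by simp
    have "(\<lambda>j. if j = l then m else if j \<in> J then ms ! card {i \<in> J - {l}. j < i} else e j) = Bv e (m#ms) J"
    proof (rule ext)
      fix j
      show "(if j = l then m else if j \<in> J then ms ! card {i \<in> J - {l}. j < i} else e j) = Bv e (m#ms) J j"
      proof (cases "j \<in> J \<and> j \<noteq> l")
        case True
        have jl: "j < l"
        proof (rule ccontr)
          assume "\<not> j < l"
          then have "l < j" using True by simp
          then show False using True empty by blast
        qed
        have "{i \<in> J - {l}. j < i} = {i \<in> J. j < i} - {l}" by auto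
        moreover have "l \<in> {i \<in> J. j < i}" using jl less.prems by auto
        moreover have "finite {i \<in> J. j < i}" using assms(1) by simp
        ultimately have c: "card {i \<in> J - {l}. j < i} = card {i \<in> J. j < i} - 1"
          by (simp add: card_Diff_singleton)
        have "card {i \<in> J. j < i} > 0" using \<open>l \<in> {i \<in> J. j < i}\<close> \<open>finite {i \<in> J. j < i}\<close>
          by (auto simp: card_gt_0_iff)
        have "Bv e (m#ms) J j = (m#ms) ! card {i\<in>J. j<i}" using True by (simp add: Bv_def)
        also have "\<dots> = ms ! (card {i\<in>J. j<i} - 1)" using \<open>card {i \<in> J. j < i} > 0\<close> by (simp add: nth_Cons')
        finally have "Bv e (m#ms) J j = ms ! card {i \<in> J - {l}. j < i}" using c by simp
        then show ?thesis using True by simp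
      next
        case False
        show ?thesis
        proof (cases "j = l")
          case True
          then show ?thesis using \<open>card {i\<in>J. l < i} = 0\<close> less.prems by (simp add: Bv_def)
        next
          case False
          then have "j \<notin> J" using \<open>\<not> (j \<in> J \<and> j \<noteq> l)\<close> by blast
          then show ?thesis using False by (simp add: Bv_def)
        qed
      qed
    qed
    then show ?thesis using True by simp
  next
    case False
    define S where "S = {i\<in>J. l < i}"
    have fS: "finite S" using assms(1) by (simp add: S_def)
    have neS: "S \<noteq> {}" using False S_def card.empty by metis
    define l' where "l' = Min S"
    have l'S: "l' \<in> S" using fS neS by (simp add: l'_def)
    have l'min: "\<And>i. i \<in> S \<Longrightarrow> l' \<le> i" using fS by (simp add: l'_def)
    have l'J: "l' \<in> J" and ll': "l < l'" using l'S by (auto simp: S_def)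
    have nobetween: "\<And>i. i \<in> J \<Longrightarrow> l < i \<Longrightarrow> l' \<le> i" using l'min by (auto simp: S_def)
    have nb2: "\<And>i. i \<in> J \<Longrightarrow> l < i \<Longrightarrow> i \<noteq> l' \<Longrightarrow> l' < i"
      using nobetween by (metis le_neq_implies_less)
    have Seq: "S = insert l' {i\<in>J. l' < i}" using l'S ll' by (auto simp: S_def dest: nb2)
    have "l' \<notin> {i\<in>J. l' < i}" by simp
    then have cS: "card S = Suc (card {i\<in>J. l' < i})" using Seq fS by (simp add: S_def)
    have IH: "D n (\<lambda>j. if j = l' then m else if j \<in> J then ms ! card {i \<in> J - {l'}. j < i} else e j)
       = (-1)^(card {i\<in>J. l' < i}) * D n (Bv e (m#ms) J)"
      using cS l'J by (intro less.hyps) (auto simp: S_def)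
    define A where "A = (\<lambda>j. if j = l' then m else if j \<in> J then ms ! card {i \<in> J - {l'}. j < i} else e j)"
    have eqA: "(\<lambda>j. if j = l then m else if j \<in> J then ms ! card {i \<in> J - {l}. j < i} else e j) = A \<circ> sw l l'"
    proof (rule ext)
      fix j
      show "(if j = l then m else if j \<in> J then ms ! card {i \<in> J - {l}. j < i} else e j) = (A \<circ> sw l l') j"
      proof -
        consider "j = l" | "j = l'" | "j \<in> J" "j \<noteq> l" "j \<noteq> l'" "l' < j" | "j \<in> J" "j \<noteq> l" "j \<noteq> l'" "j < l" | "j \<notin> J"
        proof -
          have "j = l \<or> j = l' \<or> (j \<in> J \<and> j \<noteq> l \<and> j \<noteq> l' \<and> l' < j) \<or> (j \<in> J \<and> j \<noteq> l \<and> j \<noteq> l' \<and> j < l) \<or> j \<notin> J"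
          proof (cases "j \<in> J \<and> j \<noteq> l \<and> j \<noteq> l'")
            case True
            then have "j < l \<or> l < j" by auto
            then show ?thesis using True nb2 by blast
          next
            case False
            then show ?thesis by blast
          qed
          then show ?thesis using that by blast
        qed
        then show ?thesis
        proof cases
          case 1
          then show ?thesis using ll' by (simp add: A_def sw_def)
        next
          case 2
          have "{i \<in> J - {l}. l' < i} = {i \<in> J - {l'}. l < i}"
            using nobetween ll' by (auto simp: le_less)
          then show ?thesis using 2 ll' l'J less.prems by (simp add: A_def sw_def)
        next
          case 3
          have "{i \<in> J - {l}. j < i} = {i \<in> J - {l'}. j < i}" using 3 ll' by auto
          then show ?thesis using 3 by (simp add: A_def sw_def)
        next
          case 4
          have f: "finite {i \<in> J. j < i}" using assms(1) by simp
          have "{i \<in> J - {l}. j < i} = {i \<in> J. j < i} - {l}" "{i \<in> J - {l'}. j < i} = {i \<in> J. j < i} - {l'}"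
            by auto
          moreover have "l \<in> {i \<in> J. j < i}" "l' \<in> {i \<in> J. j < i}" using 4 ll' less.prems l'J by auto
          ultimately have "card {i \<in> J - {l}. j < i} = card {i \<in> J - {l'}. j < i}"
            using f by (simp add: card_Diff_singleton)
          then show ?thesis using 4 by (simp add: A_def sw_def)
        next
          case 5
          then show ?thesis using less.prems l'J by (auto simp: A_def sw_def)
        qed
      qed
    qed
    have "l < n" "l' < n" using assms(2) less.prems l'J by auto
    then have "D n (A \<circ> sw l l') = - D n A" using ll' by (intro D_swap) auto
    then show ?thesis unfolding eqA using IH cS by (simp add: A_def S_def)
  qed
qed



fun Cf :: "nat \<Rightarrow> real" where
  "Cf 0 = 1"
| "Cf (Suc k) = (-1)^k * real (Suc k) * Cf k"

lemma Cf_nz: "Cf k \<noteq> 0"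
  by (induction k) auto

lemma Gmain:
  "finite J \<Longrightarrow> J \<subseteq> {..<n} \<Longrightarrow> card J = length ms \<Longrightarrow> (\<forall>j\<in>J. e j = 0) \<Longrightarrow>
   G n ms J e = Cf (length ms) * D n (Bv e ms J)"
proof (induction ms arbitrary: J e)
  case Nil
  then have "J = {}" by simp
  moreover have "Bv e [] {} = e" by (rule ext) (simp add: Bv_def)
  ultimately show ?case by (simp add: G_nil)
next
  case (Cons m ms)
  let ?k = "length ms"
  have trm: "wedge_sign l (J-{l}) * G n ms (J-{l}) (e(l := e l + m)) = (-1)^?k * Cf ?k * D n (Bv e (m#ms) J)"
    if lJ: "l \<in> J" for l
  proof -
    have el: "e(l := e l + m) = e(l := m)" using Cons.prems lJ by simp
    have "G n ms (J-{l}) (e(l := m)) = Cf ?k * D n (Bv (e(l:=m)) ms (J - {l}))"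
      using Cons.prems lJ by (intro Cons.IH) (auto simp: card_Diff_singleton)
    moreover have "Bv (e(l:=m)) ms (J - {l}) = (\<lambda>j. if j = l then m else if j \<in> J then ms ! card {i \<in> J - {l}. j < i} else e j)"
      by (rule ext) (auto simp: Bv_def)
    ultimately have 1: "G n ms (J-{l}) (e(l := m)) = Cf ?k * ((-1)^(card {i\<in>J. l < i}) * D n (Bv e (m#ms) J))"
      using cycle_lemma[OF Cons.prems(1,2) lJ, of m ms e] by simp
    have un: "J - {l} = {i\<in>J - {l}. i < l} \<union> {i\<in>J. l < i}" by auto
    have "card ({i\<in>J - {l}. i < l} \<union> {i\<in>J. l < i}) = card {i\<in>J - {l}. i < l} + card {i\<in>J. l < i}"
      using Cons.prems(1) by (intro card_Un_disjoint) auto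
    then have "card (J - {l}) = card {i\<in>J - {l}. i < l} + card {i\<in>J. l < i}"
      by (simp only: un[symmetric])
    then have cs: "card {i\<in>J - {l}. i < l} + card {i\<in>J. l < i} = ?k"
      using Cons.prems lJ by (simp add: card_Diff_singleton)
    have "wedge_sign l (J-{l}) * (-1::real)^(card {i\<in>J. l < i}) = (-1)^?k"
      unfolding wedge_sign_def power_add[symmetric] cs ..
    then show ?thesis unfolding el 1 by (simp add: algebra_simps)
  qed
  have "G n (m#ms) J e = (\<Sum>l\<in>J. (-1)^?k * Cf ?k * D n (Bv e (m#ms) J))"
    using Cons.prems trm by (simp add: G_cons)
  also have "\<dots> = Cf (length (m#ms)) * D n (Bv e (m#ms) J)"
    using Cons.prems by simp
  finally show ?case .
qed



lemma Delta_Suc: "Delta (Suc n) {} = (\<lambda>p. Delta n {} p * (\<Prod>i<n. p i - p n))"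
proof (rule ext)
  fix p :: "nat \<Rightarrow> real"
  have un: "{(i,j). i < j \<and> j < Suc n} = {(i,j). i < j \<and> j < n} \<union> (\<lambda>i. (i,n)) ` {..<n}"
    by auto
  have "Delta (Suc n) {} p = (\<Prod>x\<in>{(i,j). i < j \<and> j < n} \<union> (\<lambda>i. (i,n)) ` {..<n}. p (fst x) - p (snd x))"
    by (simp only: Delta0_prod un)
  also have "\<dots> = (\<Prod>x\<in>{(i,j). i < j \<and> j < n}. p (fst x) - p (snd x)) * (\<Prod>x\<in>(\<lambda>i. (i,n)) ` {..<n}. p (fst x) - p (snd x))"
    by (rule prod.union_disjoint) (auto simp: finite_pairs)
  also have "(\<Prod>x\<in>(\<lambda>i. (i,n)) ` {..<n}. p (fst x) - p (snd x)) = (\<Prod>i<n. p i - p n)"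
    by (subst prod.reindex) (auto simp: inj_on_def)
  finally show "Delta (Suc n) {} p = Delta n {} p * (\<Prod>i<n. p i - p n)"
    by (simp add: Delta0_prod)
qed

lemma Delta_indep: "Delta n {} (p(n:=t)) = Delta n {} p"
  unfolding Delta0_prod by (rule prod.cong) auto

lemma pow_indep_mult:
  assumes "g \<in> PF" "\<And>p t. g (p(l:=t)) = g p" "h \<in> PF"
  shows "(partial l ^^ k) (\<lambda>p. g p * h p) = (\<lambda>p. g p * (partial l ^^ k) h p)"
proof (induction k)
  case 0
  then show ?case by simp
next
  case (Suc k)
  have "partial l g = (\<lambda>p. 0)" using assms(2) by (rule partial_indep)
  then show ?case using Suc assms by (simp add: partial_mult)
qed

lemma partial_lin_factor: "a \<noteq> L \<Longrightarrow> partial L (\<lambda>p. p a - p L) = (\<lambda>p. - 1)"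
  by (simp add: partial_diff PF_coord partial_coord)

lemma lin_leibniz:
  assumes "h \<in> PF" "a \<noteq> L"
  shows "(partial L ^^ Suc j) (\<lambda>p. (p a - p L) * h p)
     = (\<lambda>p. (p a - p L) * (partial L ^^ Suc j) h p - real (Suc j) * (partial L ^^ j) h p)"
proof (induction j)
  case 0
  have "partial L (\<lambda>p. (p a - p L) * h p) = (\<lambda>p. (p a - p L) * partial L h p - h p)"
    using assms by (simp add: partial_mult PF_coord partial_lin_factor)
  then show ?case by simp
next
  case (Suc j)
  have PF1: "(\<lambda>p. (p a - p L) * (partial L ^^ Suc j) h p) \<in> PF"
    using assms by (intro PF_mult PF_diff PF_coord PF_pow)
  have PF2: "(\<lambda>p. real (Suc j) * (partial L ^^ j) h p) \<in> PF"
    using assms by (intro PF_cmult PF_pow)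
  have "(partial L ^^ Suc (Suc j)) (\<lambda>p. (p a - p L) * h p)
     = partial L (\<lambda>p. (p a - p L) * (partial L ^^ Suc j) h p - real (Suc j) * (partial L ^^ j) h p)"
    using Suc by simp
  also have "\<dots> = (\<lambda>p. partial L (\<lambda>p. (p a - p L) * (partial L ^^ Suc j) h p) p - partial L (\<lambda>p. real (Suc j) * (partial L ^^ j) h p) p)"
    using PF1 PF2 by (rule partial_diff)
  also have "\<dots> = (\<lambda>p. (p a - p L) * (partial L ^^ Suc (Suc j)) h p - real (Suc (Suc j)) * (partial L ^^ Suc j) h p)"
  proof -
    have A1: "partial L (\<lambda>p. (p a - p L) * (partial L ^^ Suc j) h p) = (\<lambda>p. (- 1) * (partial L ^^ Suc j) h p + (p a - p L) * partial L ((partial L ^^ Suc j) h) p)"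
      using assms by (simp only: partial_mult[OF PF_diff[OF PF_coord PF_coord] PF_pow[OF assms(1)]] partial_lin_factor[OF assms(2)])
    have A2: "partial L (\<lambda>p. real (Suc j) * (partial L ^^ j) h p) = (\<lambda>p. real (Suc j) * partial L ((partial L ^^ j) h) p)"
      using assms by (simp only: partial_cmult[OF PF_pow[OF assms(1)]])
    show ?thesis unfolding A1 A2 by (rule ext) (simp add: algebra_simps)
  qed
  finally show ?case .
qed

lemma Qlemma:
  "finite A \<Longrightarrow> L \<notin> A \<Longrightarrow> (partial L ^^ card A) (\<lambda>p. \<Prod>i\<in>A. p i - p L) = (\<lambda>p. (-1)^card A * fact (card A))"
proof (induction A rule: finite_induct)
  case empty
  then show ?case by simp
next
  case (insert a A)
  have PFA: "(\<lambda>p. \<Prod>i\<in>A. p i - p L) \<in> PF" by (intro PF_prod PF_diff PF_coord)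
  have aL: "a \<noteq> L" using insert by auto
  have z: "(partial L ^^ Suc (card A)) (\<lambda>p. \<Prod>i\<in>A. p i - p L) = (\<lambda>p. 0)"
    using insert by simp
  have "(partial L ^^ card (insert a A)) (\<lambda>p. \<Prod>i\<in>insert a A. p i - p L)
     = (partial L ^^ Suc (card A)) (\<lambda>p. (p a - p L) * (\<Prod>i\<in>A. p i - p L))"
    using insert by simp
  also have "\<dots> = (\<lambda>p. (p a - p L) * 0 - real (Suc (card A)) * ((-1)^card A * fact (card A)))"
    unfolding lin_leibniz[OF PFA aL] z using insert by simp
  also have "\<dots> = (\<lambda>p. (-1)^card (insert a A) * fact (card (insert a A)))"
    using insert by (simp add: algebra_simps)
  finally show ?case .
qed

lemma D_id: "D n (\<lambda>i. i) \<noteq> 0"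
proof (induction n)
  case 0
  then show ?case by (simp add: D_def Delta0_prod)
next
  case (Suc n)
  define c :: real where "c = (-1)^n * fact n"
  have c0: "c \<noteq> 0" by (simp add: c_def)
  have "(partial n ^^ n) (Delta (Suc n) {}) = (\<lambda>p. Delta n {} p * (partial n ^^ n) (\<lambda>p. \<Prod>i<n. p i - p n) p)"
    unfolding Delta_Suc
    by (rule pow_indep_mult) (auto simp: Delta_indep intro!: PF_prod PF_diff PF_coord)
  also have "\<dots> = (\<lambda>p. c * Delta n {} p)"
    using Qlemma[of "{..<n}" n] by (simp add: c_def mult.commute)
  finally have 1: "(partial n ^^ n) (Delta (Suc n) {}) = (\<lambda>p. c * Delta n {} p)" .
  have "D (Suc n) (\<lambda>i. i) = pd (\<lambda>i. i) n (\<lambda>p. c * Delta n {} p) (\<lambda>_. 0)"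
    by (simp add: D_def 1)
  also have "\<dots> = c * D n (\<lambda>i. i)"
    by (simp add: pd_cmult D_def)
  finally show ?case using c0 Suc by simp
qed


lemma sorted_gt_distinct: "sorted_wrt (>) (xs::nat list) \<Longrightarrow> distinct xs"
proof -
  assume "sorted_wrt (>) xs"
  then have "sorted_wrt (<) (rev xs)" by (simp add: sorted_wrt_rev)
  then have "distinct (rev xs)" by (simp add: strict_sorted_iff)
  then show "distinct xs" by simp
qed

lemma card_greater:
  assumes s: "sorted_wrt (>) (xs::nat list)" and r: "r < length xs"
  shows "card {i\<in>set xs. xs!r < i} = r"
proof -
  have d: "distinct xs" using s by (rule sorted_gt_distinct)
  have eq: "{i\<in>set xs. xs!r < i} = (\<lambda>q. xs!q) ` {..<r}"
  proof
    show "{i\<in>set xs. xs!r < i} \<subseteq> (\<lambda>q. xs!q) ` {..<r}"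
    proof
      fix i assume "i \<in> {i\<in>set xs. xs!r < i}"
      then obtain q where q: "q < length xs" "i = xs!q" "xs!r < xs!q" by (auto simp: in_set_conv_nth)
      have "q < r"
      proof (rule ccontr)
        assume "\<not> q < r"
        then have "q = r \<or> r < q" by auto
        then show False
        proof
          assume "q = r" then show False using q by simp
        next
          assume "r < q" then have "xs!r > xs!q" using sorted_wrt_nth_less[OF s _ q(1)] by blast
          then show False using q by simp
        qed
      qed
      then show "i \<in> (\<lambda>q. xs!q) ` {..<r}" using q by auto
    qed
    show "(\<lambda>q. xs!q) ` {..<r} \<subseteq> {i\<in>set xs. xs!r < i}"
    proof
      fix i assume "i \<in> (\<lambda>q. xs!q) ` {..<r}"
      then obtain q where q: "q < r" "i = xs!q" by auto
      have "xs!q > xs!r" using sorted_wrt_nth_less[OF s q(1) r] by blast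
      then show "i \<in> {i\<in>set xs. xs!r < i}" using q r by auto
    qed
  qed
  have inj: "inj_on (\<lambda>q. xs!q) {..<r}"
    using d r by (auto simp: inj_on_def nth_eq_iff_index_eq)
  show ?thesis unfolding eq using card_image[OF inj] by simp
qed

lemma Bv_id:
  assumes "sorted_wrt (>) (m::nat list)"
  shows "Bv (\<lambda>l. if l \<in> set m then 0 else l) m (set m) = (\<lambda>j. j)"
proof (rule ext)
  fix j
  show "Bv (\<lambda>l. if l \<in> set m then 0 else l) m (set m) j = j"
  proof (cases "j \<in> set m")
    case True
    then obtain r where r: "r < length m" "j = m!r" by (auto simp: in_set_conv_nth)
    then show ?thesis using card_greater[OF assms r(1)] True by (simp add: Bv_def)
  next
    case False
    then show ?thesis by (simp add: Bv_def)
  qed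
qed

lemma finite_index_seqs: "finite (index_seqs n)"
proof -
  have "index_seqs n \<subseteq> {xs. set xs \<subseteq> {1..n-1} \<and> length xs \<le> card {1..n-1}}"
  proof
    fix xs assume "xs \<in> index_seqs n"
    then have s: "sorted_wrt (>) xs" and st: "set xs \<subseteq> {1..n-1}" by (auto simp: index_seqs_def)
    have "length xs = card (set xs)" using sorted_gt_distinct[OF s] by (simp add: distinct_card)
    also have "\<dots> \<le> card {1..n-1}" using st by (intro card_mono) auto
    finally show "xs \<in> {xs. set xs \<subseteq> {1..n-1} \<and> length xs \<le> card {1..n-1}}" using st by simp
  qed
  moreover have "finite {xs. set xs \<subseteq> {1..n-1} \<and> length xs \<le> card {1..n-1}}"
    by (rule finite_lists_length_le) simp
  ultimately show ?thesis by (rule finite_subset)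
qed

lemma G_other:
  assumes mS: "m \<in> index_seqs n" and sS: "s \<in> index_seqs n" and sm: "s \<noteq> m"
  shows "G n s (set m) (\<lambda>l. if l \<in> set m then 0 else l) = 0"
proof -
  have ms: "sorted_wrt (>) m" "set m \<subseteq> {1..n-1}" using mS by (auto simp: index_seqs_def)
  have ss: "sorted_wrt (>) s" "set s \<subseteq> {1..n-1}" using sS by (auto simp: index_seqs_def)
  have dm: "distinct m" using ms(1) by (rule sorted_gt_distinct)
  have ds: "distinct s" using ss(1) by (rule sorted_gt_distinct)
  show ?thesis
  proof (cases "length s = length m")
    case False
    then show ?thesis using dm by (intro Z0) (auto simp: distinct_card)
  next
    case True
    have "\<exists>v. v \<in> set s \<and> v \<notin> set m"
    proof (rule ccontr)
      assume "\<not> (\<exists>v. v \<in> set s \<and> v \<notin> set m)"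
      then have sub: "set s \<subseteq> set m" by auto
      have "card (set s) = card (set m)" using True dm ds by (simp add: distinct_card)
      then have eqs: "set s = set m" using sub by (intro card_subset_eq) auto
      have "sorted_wrt (<) (rev s)" "sorted_wrt (<) (rev m)" using ms(1) ss(1) by (simp_all add: sorted_wrt_rev)
      then have "rev s = rev m" using eqs by (intro strict_sorted_equal) auto
      then show False using sm by simp
    qed
    then obtain v where v: "v \<in> set s" "v \<notin> set m" by blast
    have "v \<in> {1..n-1}" using v(1) ss(2) by blast
    then have vn: "v < n" by auto
    show ?thesis
      by (rule Z2[of "set m" _ v s v]) (use v vn in auto)
  qed
qed

theorem lemma12:
  fixes n :: nat
  shows "finite (index_seqs n) \<and> lin_indep_family (index_seqs n) (omega n)"
proof
  show fin: "finite (index_seqs n)" by (rule finite_index_seqs)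
  show "lin_indep_family (index_seqs n) (omega n)"
    unfolding lin_indep_family_def
  proof (intro allI impI ballI)
    fix c :: "nat list \<Rightarrow> real" and m
    assume H: "\<forall>J p. (\<Sum>s\<in>index_seqs n. c s * omega n s J p) = 0" and mS: "m \<in> index_seqs n"
    let ?S = "index_seqs n"
    define J where "J = set m"
    define e where "e = (\<lambda>l. if l \<in> set m then 0 else l)"
    have ms: "sorted_wrt (>) m" "set m \<subseteq> {1..n-1}" using mS by (auto simp: index_seqs_def)
    have dm: "distinct m" using ms(1) by (rule sorted_gt_distinct)
    have mn: "set m \<subseteq> {..<n}"
    proof
      fix x assume "x \<in> set m"
      then have "x \<in> {1..n-1}" using ms(2) by blast
      then show "x \<in> {..<n}" by auto
    qed
    have "(\<lambda>p. \<Sum>s\<in>?S. c s * omega n s J p) = (\<lambda>p. 0)" using H by auto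
    then have "0 = pd e n (\<lambda>p. \<Sum>s\<in>?S. c s * omega n s J p) (\<lambda>_. 0)" by simp
    also have "\<dots> = (\<Sum>s\<in>?S. c s * G n s J e)" by (simp add: pd_lin G_def)
    also have "\<dots> = c m * G n m J e + (\<Sum>s\<in>?S - {m}. c s * G n s J e)"
      by (rule sum.remove[OF fin mS])
    also have "(\<Sum>s\<in>?S - {m}. c s * G n s J e) = 0"
      using G_other[OF mS] by (intro sum.neutral) (auto simp: J_def e_def)
    also have "G n m J e = Cf (length m) * D n (Bv e m J)"
      using ms dm mn unfolding J_def
      by (intro Gmain) (auto simp: e_def distinct_card)
    also have "Bv e m J = (\<lambda>j. j)" unfolding e_def J_def by (rule Bv_id[OF ms(1)])
    finally have "c m * (Cf (length m) * D n (\<lambda>j. j)) = 0" by simp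
    then show "c m = 0" using Cf_nz D_id by simp
  qed
qed

end
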